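(* For every $n\ge1$, the $n\times n$ grid communication graph (with a direction assignment giving adjacent circles opposite directions) has exactly $n$ rings, each of length $2n\pi$, and each ring hits each of the four walls exactly once.
   Context: Grid. The $n\times m$ grid communication graph consists of $nm$ pairwise disjoint unit circles, circle $(i,j)$ in row $i$ (rows horizontal, row 1 on top) and column $j$ (columns vertical, column 1 on the left), centres on a square lattice, circle $(i,j)$ adjacent exactly to the existing circles $(i\pm1,j)$, $(i,j\pm1)$. For adjacent circles $C_i,C_j$, the link position $\phi_{ij}$ is the point of $C_i$ closest to $C_j$. A direction assignment gives each circle $C$ a direction $g(C)\in\{1,-1\}$ (counterclockwise/clockwise), with $g(C_i)=-g(C_j)$ for adjacent circles. Rings. Trace a point moving along a circle $C_i$ in direction $g(C_i)$; whenever it reaches a link position $\phi_{ij}$ of its current circle, it passes to $C_j$ at $\phi_{ji}$ and continues along $C_j$ in direction $g(C_j)$. This motion is periodic and the closed curve it traces is a ring. The circles decompose into rings overlapping only at link positions. The length of a ring is the total length of the circle arcs forming it. Walls. A ring hits the top wall each time it passes through the topmost point of a circle of row 1; similarly bottom wall (bottommost points of circles of the last row), left wall (leftmost points of circles of column 1) and right wall (rightmost points of circles of the last column). *)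

theory Defs
  imports Complex_Main
begin

text \<open>Circle (i,j) with 1 \<le> i \<le> n (row, row 1 on top) and 1 \<le> j \<le> m (column, column 1 left).
  On each unit circle the four quarter points are numbered by angle k*pi/2:
  0 = rightmost (east), 1 = topmost (north), 2 = leftmost (west), 3 = bottommost (south).
  Point p of circle c is the link position towards the neighbour in direction p (if it exists);
  the corresponding link position on the neighbour is its point (p+2) mod 4.
  Arc (c,k) is the quarter arc of circle c from point k to point (k+1) mod 4
  (counterclockwise), of length pi/2.\<close>

type_synonym circ = "nat \<times> nat"
type_synonym arc = "circ \<times> nat"

definition grid :: "nat \<Rightarrow> nat \<Rightarrow> circ set" where
  "grid n m = {1..n} \<times> {1..m}"

definition nbr :: "nat \<Rightarrow> nat \<Rightarrow> circ \<Rightarrow> nat \<Rightarrow> circ option" where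
  "nbr n m c p =
     (let i = fst c; j = snd c;
          c' = (if p = 0 then (i, j + 1) else if p = 1 then (i - 1, j)
                else if p = 2 then (i, j - 1) else (i + 1, j))
      in if c \<in> grid n m \<and> p < 4 \<and> c' \<in> grid n m \<and> c' \<noteq> c then Some c' else None)"

definition adjacent :: "nat \<Rightarrow> nat \<Rightarrow> circ \<Rightarrow> circ \<Rightarrow> bool" where
  "adjacent n m c c' \<longleftrightarrow> c \<in> grid n m \<and> c' \<in> grid n m \<and>
     (\<bar>int (fst c) - int (fst c')\<bar> + \<bar>int (snd c) - int (snd c')\<bar> = 1)"

text \<open>Direction assignment: 1 = counterclockwise, -1 = clockwise; adjacent circles opposite.\<close>
definition direction_assignment :: "nat \<Rightarrow> nat \<Rightarrow> (circ \<Rightarrow> int) \<Rightarrow> bool" where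
  "direction_assignment n m g \<longleftrightarrow>
     (\<forall>c \<in> grid n m. g c = 1 \<or> g c = -1) \<and>
     (\<forall>c c'. adjacent n m c c' \<longrightarrow> g c = - g c')"

definition arcs :: "nat \<Rightarrow> nat \<Rightarrow> arc set" where
  "arcs n m = grid n m \<times> {0..<4}"

text \<open>Quarter point at which the moving point leaves arc a (traversed in direction g).\<close>
definition end_pt :: "(circ \<Rightarrow> int) \<Rightarrow> arc \<Rightarrow> nat" where
  "end_pt g a = (if g (fst a) = 1 then (snd a + 1) mod 4 else snd a)"

text \<open>Arc of circle c traversed in direction g c starting at quarter point s.\<close>
definition arc_from :: "(circ \<Rightarrow> int) \<Rightarrow> circ \<Rightarrow> nat \<Rightarrow> arc" where
  "arc_from g c s = (c, if g c = 1 then s else (s + 3) mod 4)"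

text \<open>The motion: after traversing arc a, the next arc traversed.  If the end point is a link
  position, pass to the neighbour at the opposite point and continue in its direction.\<close>
definition next_arc :: "nat \<Rightarrow> nat \<Rightarrow> (circ \<Rightarrow> int) \<Rightarrow> arc \<Rightarrow> arc" where
  "next_arc n m g a =
     (let e = end_pt g a in
      case nbr n m (fst a) e of
        Some c' \<Rightarrow> arc_from g c' ((e + 2) mod 4)
      | None \<Rightarrow> arc_from g (fst a) e)"

definition ring_of :: "nat \<Rightarrow> nat \<Rightarrow> (circ \<Rightarrow> int) \<Rightarrow> arc \<Rightarrow> arc set" where
  "ring_of n m g a = {(next_arc n m g ^^ t) a | t. True}"

definition rings :: "nat \<Rightarrow> nat \<Rightarrow> (circ \<Rightarrow> int) \<Rightarrow> arc set set" where
  "rings n m g = ring_of n m g ` arcs n m"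

definition ring_length :: "arc set \<Rightarrow> real" where
  "ring_length R = (pi / 2) * real (card R)"

definition hits_top :: "nat \<Rightarrow> nat \<Rightarrow> (circ \<Rightarrow> int) \<Rightarrow> arc set \<Rightarrow> nat" where
  "hits_top n m g R = card {a \<in> R. fst (fst a) = 1 \<and> end_pt g a = 1}"
definition hits_bottom :: "nat \<Rightarrow> nat \<Rightarrow> (circ \<Rightarrow> int) \<Rightarrow> arc set \<Rightarrow> nat" where
  "hits_bottom n m g R = card {a \<in> R. fst (fst a) = n \<and> end_pt g a = 3}"
definition hits_left :: "nat \<Rightarrow> nat \<Rightarrow> (circ \<Rightarrow> int) \<Rightarrow> arc set \<Rightarrow> nat" where
  "hits_left n m g R = card {a \<in> R. snd (fst a) = 1 \<and> end_pt g a = 2}"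
definition hits_right :: "nat \<Rightarrow> nat \<Rightarrow> (circ \<Rightarrow> int) \<Rightarrow> arc set \<Rightarrow> nat" where
  "hits_right n m g R = card {a \<in> R. snd (fst a) = m \<and> end_pt g a = 0}"

end

theory Submission
  imports Defs
begin

lemma modsmall: "y < (N::nat) \<Longrightarrow> t < N \<Longrightarrow> (y+t) mod N = (if y + t < N then y + t else y + t - N)"
proof -
  assume "y < N" "t < N"
  show ?thesis
  proof (cases "y + t < N")
    case False
    then have "(y+t) mod N = (y+t-N) mod N" by (simp add: le_mod_geq)
    also have "\<dots> = y + t - N" using \<open>y<N\<close> \<open>t<N\<close> by simp
    finally show ?thesis using False by simp
  qed simp
qed
lemma cancel: "t1 < (N::nat) \<Longrightarrow> t2 < N \<Longrightarrow> (x+t1) mod N = (x+t2) mod N \<Longrightarrow> t1 = t2"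
proof -
  assume a: "t1 < N" "t2 < N" "(x+t1) mod N = (x+t2) mod N"
  have y: "x mod N < N" using a by simp
  have "(x mod N + t1) mod N = (x mod N + t2) mod N" using a(3) by (simp add: mod_add_left_eq)
  then show ?thesis using modsmall[OF y a(1)] modsmall[OF y a(2)] y a by (auto split: if_splits)
qed

definition UU :: "nat \<Rightarrow> (circ \<Rightarrow> int) \<Rightarrow> arc \<Rightarrow> nat" where
"UU n g a = (let j = snd (fst a); k = snd a in
  if g (fst a) = 1 then (if k=0 then 4*n-2*j else if k=1 then 4*n-2*j+1 else if k=2 then 2*j-2 else 2*j-1)
  else (if k=0 then 2*j-1 else if k=1 then 2*j-2 else if k=2 then 4*n-2*j+1 else 4*n-2*j))"

definition VV :: "nat \<Rightarrow> (circ \<Rightarrow> int) \<Rightarrow> arc \<Rightarrow> nat" where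
"VV n g a = (let i = fst (fst a); k = snd a in
  if g (fst a) = 1 then (if k=0 then 4*n-2*i+1 else if k=1 then 2*i-2 else if k=2 then 2*i-1 else 4*n-2*i)
  else (if k=0 then 2*i-2 else if k=1 then 4*n-2*i+1 else if k=2 then 4*n-2*i else 2*i-1))"

lemma nbr_eq:
  assumes "1 \<le> i" "i \<le> n" "1 \<le> j" "j \<le> m"
  shows "nbr n m (i,j) 0 = (if j < m then Some (i, j+1) else None)"
    "nbr n m (i,j) 1 = (if 1 < i then Some (i-1, j) else None)"
    "nbr n m (i,j) 2 = (if 1 < j then Some (i, j-1) else None)"
    "nbr n m (i,j) 3 = (if i < n then Some (i+1, j) else None)"
  using assms by (auto simp: nbr_def grid_def Let_def)

lemma nbr_eq1':
  assumes "1 \<le> i" "i \<le> n" "1 \<le> j" "j \<le> m"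
  shows "nbr n m (i,j) (Suc 0) = (if 1 < i then Some (i-1, j) else None)"
  using nbr_eq(2)[OF assms] by simp

lemma gval:
  assumes "direction_assignment n m g" "1 \<le> i" "i \<le> n" "1 \<le> j" "j \<le> m"
  shows "g (i,j) = 1 \<or> g (i,j) = -1"
  using assms by (auto simp: direction_assignment_def grid_def)

lemma gadj:
  assumes "direction_assignment n m g" "(i,j) \<in> grid n m" "(i',j') \<in> grid n m"
    "\<bar>int i - int i'\<bar> + \<bar>int j - int j'\<bar> = 1"
  shows "g (i',j') = - g (i,j)"
  using assms unfolding direction_assignment_def adjacent_def by auto

lemma step:
  assumes da: "direction_assignment n n g" and a: "a \<in> arcs n n"
  shows "next_arc n n g a \<in> arcs n n \<and>
     UU n g (next_arc n n g a) = (if UU n g a + 1 = 4*n then 0 else UU n g a + 1) \<and>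
     VV n g (next_arc n n g a) = (if VV n g a + 1 = 4*n then 0 else VV n g a + 1)"
proof -
  obtain i j k where aa: "a = ((i,j),k)" and i: "1 \<le> i" "i \<le> n" and j: "1 \<le> j" "j \<le> n" and k: "k < 4"
    using a by (auto simp: arcs_def grid_def)
  have g1: "g (i,j) = 1 \<or> g (i,j) = -1" using gval[OF da i j] .
  have gR: "j < n \<Longrightarrow> g (i,j+1) = - g (i,j)" by (rule gadj[OF da, of i j]) (use i j in \<open>auto simp: grid_def of_nat_diff\<close>)
  have gL: "1 < j \<Longrightarrow> g (i,j-1) = - g (i,j)" by (rule gadj[OF da, of i j]) (use i j in \<open>auto simp: grid_def of_nat_diff\<close>)
  have gU: "1 < i \<Longrightarrow> g (i-1,j) = - g (i,j)" by (rule gadj[OF da, of i j]) (use i j in \<open>auto simp: grid_def of_nat_diff\<close>)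
  have gD: "i < n \<Longrightarrow> g (i+1,j) = - g (i,j)" by (rule gadj[OF da, of i j]) (use i j in \<open>auto simp: grid_def of_nat_diff\<close>)
  note nb = nbr_eq[OF i j] nbr_eq1'[OF i j]
  have "k = 0 \<or> k = 1 \<or> k = 2 \<or> k = 3" using k by auto
  moreover note g1
  ultimately show ?thesis
  proof (elim disjE)
    assume kk: "k = 0" and s: "g (i,j) = 1"
    have e: "end_pt g a = 1" by (simp add: end_pt_def aa kk s)
    show ?thesis
    proof (cases "1 < i")
      case True
      have nb1: "nbr n n (fst a) 1 = Some (i-1, j)" using True i j by (auto simp add: aa nbr_def grid_def Let_def)
      have g2: "g (i-1, j) = -1" using gU[OF True] s by simp
      have nx: "next_arc n n g a = ((i-1, j), 2)" using nb1 g2 unfolding next_arc_def Let_def e by (simp add: arc_from_def)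
      show ?thesis using True i j s g2 unfolding nx by (auto simp add: aa kk UU_def VV_def arcs_def grid_def)
    next
      case False
      have nb1: "nbr n n (fst a) 1 = None" using False i j by (auto simp add: aa nbr_def grid_def Let_def)
      have nx: "next_arc n n g a = ((i,j), 1)" using nb1 s unfolding next_arc_def Let_def e by (simp add: arc_from_def aa)
      show ?thesis using False i j s unfolding nx by (auto simp add: aa kk UU_def VV_def arcs_def grid_def)
    qed
  next
    assume kk: "k = 0" and s: "g (i,j) = -1"
    have e: "end_pt g a = 0" by (simp add: end_pt_def aa kk s)
    show ?thesis
    proof (cases "j < n")
      case True
      have nb1: "nbr n n (fst a) 0 = Some (i, j+1)" using True i j by (auto simp add: aa nbr_def grid_def Let_def)
      have g2: "g (i, j+1) = 1" using gR[OF True] s by simp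
      have nx: "next_arc n n g a = ((i, j+1), 2)" using nb1 g2 unfolding next_arc_def Let_def e by (simp add: arc_from_def)
      show ?thesis using True i j s g2 unfolding nx by (auto simp add: aa kk UU_def VV_def arcs_def grid_def)
    next
      case False
      have nb1: "nbr n n (fst a) 0 = None" using False i j by (auto simp add: aa nbr_def grid_def Let_def)
      have nx: "next_arc n n g a = ((i,j), 3)" using nb1 s unfolding next_arc_def Let_def e by (simp add: arc_from_def aa)
      show ?thesis using False i j s unfolding nx by (auto simp add: aa kk UU_def VV_def arcs_def grid_def)
    qed
  next
    assume kk: "k = 1" and s: "g (i,j) = 1"
    have e: "end_pt g a = 2" by (simp add: end_pt_def aa kk s)
    show ?thesis
    proof (cases "1 < j")
      case True
      have nb1: "nbr n n (fst a) 2 = Some (i, j-1)" using True i j by (auto simp add: aa nbr_def grid_def Let_def)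
      have g2: "g (i, j-1) = -1" using gL[OF True] s by simp
      have nx: "next_arc n n g a = ((i, j-1), 3)" using nb1 g2 unfolding next_arc_def Let_def e by (simp add: arc_from_def)
      show ?thesis using True i j s g2 unfolding nx by (auto simp add: aa kk UU_def VV_def arcs_def grid_def)
    next
      case False
      have nb1: "nbr n n (fst a) 2 = None" using False i j by (auto simp add: aa nbr_def grid_def Let_def)
      have nx: "next_arc n n g a = ((i,j), 2)" using nb1 s unfolding next_arc_def Let_def e by (simp add: arc_from_def aa)
      show ?thesis using False i j s unfolding nx by (auto simp add: aa kk UU_def VV_def arcs_def grid_def)
    qed
  next
    assume kk: "k = 1" and s: "g (i,j) = -1"
    have e: "end_pt g a = 1" by (simp add: end_pt_def aa kk s)
    show ?thesis
    proof (cases "1 < i")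
      case True
      have nb1: "nbr n n (fst a) 1 = Some (i-1, j)" using True i j by (auto simp add: aa nbr_def grid_def Let_def)
      have g2: "g (i-1, j) = 1" using gU[OF True] s by simp
      have nx: "next_arc n n g a = ((i-1, j), 3)" using nb1 g2 unfolding next_arc_def Let_def e by (simp add: arc_from_def)
      show ?thesis using True i j s g2 unfolding nx by (auto simp add: aa kk UU_def VV_def arcs_def grid_def)
    next
      case False
      have nb1: "nbr n n (fst a) 1 = None" using False i j by (auto simp add: aa nbr_def grid_def Let_def)
      have nx: "next_arc n n g a = ((i,j), 0)" using nb1 s unfolding next_arc_def Let_def e by (simp add: arc_from_def aa)
      show ?thesis using False i j s unfolding nx by (auto simp add: aa kk UU_def VV_def arcs_def grid_def)
    qed
  next
    assume kk: "k = 2" and s: "g (i,j) = 1"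
    have e: "end_pt g a = 3" by (simp add: end_pt_def aa kk s)
    show ?thesis
    proof (cases "i < n")
      case True
      have nb1: "nbr n n (fst a) 3 = Some (i+1, j)" using True i j by (auto simp add: aa nbr_def grid_def Let_def)
      have g2: "g (i+1, j) = -1" using gD[OF True] s by simp
      have nx: "next_arc n n g a = ((i+1, j), 0)" using nb1 g2 unfolding next_arc_def Let_def e by (simp add: arc_from_def)
      show ?thesis using True i j s g2 unfolding nx by (auto simp add: aa kk UU_def VV_def arcs_def grid_def)
    next
      case False
      have nb1: "nbr n n (fst a) 3 = None" using False i j by (auto simp add: aa nbr_def grid_def Let_def)
      have nx: "next_arc n n g a = ((i,j), 3)" using nb1 s unfolding next_arc_def Let_def e by (simp add: arc_from_def aa)
      show ?thesis using False i j s unfolding nx by (auto simp add: aa kk UU_def VV_def arcs_def grid_def)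
    qed
  next
    assume kk: "k = 2" and s: "g (i,j) = -1"
    have e: "end_pt g a = 2" by (simp add: end_pt_def aa kk s)
    show ?thesis
    proof (cases "1 < j")
      case True
      have nb1: "nbr n n (fst a) 2 = Some (i, j-1)" using True i j by (auto simp add: aa nbr_def grid_def Let_def)
      have g2: "g (i, j-1) = 1" using gL[OF True] s by simp
      have nx: "next_arc n n g a = ((i, j-1), 0)" using nb1 g2 unfolding next_arc_def Let_def e by (simp add: arc_from_def)
      show ?thesis using True i j s g2 unfolding nx by (auto simp add: aa kk UU_def VV_def arcs_def grid_def)
    next
      case False
      have nb1: "nbr n n (fst a) 2 = None" using False i j by (auto simp add: aa nbr_def grid_def Let_def)
      have nx: "next_arc n n g a = ((i,j), 1)" using nb1 s unfolding next_arc_def Let_def e by (simp add: arc_from_def aa)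
      show ?thesis using False i j s unfolding nx by (auto simp add: aa kk UU_def VV_def arcs_def grid_def)
    qed
  next
    assume kk: "k = 3" and s: "g (i,j) = 1"
    have e: "end_pt g a = 0" by (simp add: end_pt_def aa kk s)
    show ?thesis
    proof (cases "j < n")
      case True
      have nb1: "nbr n n (fst a) 0 = Some (i, j+1)" using True i j by (auto simp add: aa nbr_def grid_def Let_def)
      have g2: "g (i, j+1) = -1" using gR[OF True] s by simp
      have nx: "next_arc n n g a = ((i, j+1), 1)" using nb1 g2 unfolding next_arc_def Let_def e by (simp add: arc_from_def)
      show ?thesis using True i j s g2 unfolding nx by (auto simp add: aa kk UU_def VV_def arcs_def grid_def)
    next
      case False
      have nb1: "nbr n n (fst a) 0 = None" using False i j by (auto simp add: aa nbr_def grid_def Let_def)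
      have nx: "next_arc n n g a = ((i,j), 0)" using nb1 s unfolding next_arc_def Let_def e by (simp add: arc_from_def aa)
      show ?thesis using False i j s unfolding nx by (auto simp add: aa kk UU_def VV_def arcs_def grid_def)
    qed
  next
    assume kk: "k = 3" and s: "g (i,j) = -1"
    have e: "end_pt g a = 3" by (simp add: end_pt_def aa kk s)
    show ?thesis
    proof (cases "i < n")
      case True
      have nb1: "nbr n n (fst a) 3 = Some (i+1, j)" using True i j by (auto simp add: aa nbr_def grid_def Let_def)
      have g2: "g (i+1, j) = 1" using gD[OF True] s by simp
      have nx: "next_arc n n g a = ((i+1, j), 1)" using nb1 g2 unfolding next_arc_def Let_def e by (simp add: arc_from_def)
      show ?thesis using True i j s g2 unfolding nx by (auto simp add: aa kk UU_def VV_def arcs_def grid_def)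
    next
      case False
      have nb1: "nbr n n (fst a) 3 = None" using False i j by (auto simp add: aa nbr_def grid_def Let_def)
      have nx: "next_arc n n g a = ((i,j), 2)" using nb1 s unfolding next_arc_def Let_def e by (simp add: arc_from_def aa)
      show ?thesis using False i j s unfolding nx by (auto simp add: aa kk UU_def VV_def arcs_def grid_def)
    qed
  qed
qed

lemma arcsE:
  assumes "a \<in> arcs n n"
  obtains i j k where "a = ((i,j),k)" "1 \<le> i" "i \<le> n" "1 \<le> j" "j \<le> n" "k < 4"
  using assms by (auto simp: arcs_def grid_def)

lemma bounds:
  assumes da: "direction_assignment n n g" and a: "a \<in> arcs n n"
  shows "UU n g a < 4*n \<and> VV n g a < 4*n"
proof -
  obtain i j k where aa: "a = ((i,j),k)" and i: "1 \<le> i" "i \<le> n" and j: "1 \<le> j" "j \<le> n" and k: "k < 4"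
    using a by (rule arcsE)
  show ?thesis using i j k unfolding aa by (auto simp: UU_def VV_def Let_def)
qed

definition PP :: "(circ \<Rightarrow> int) \<Rightarrow> arc \<Rightarrow> bool" where
"PP g a = (if g (fst a) = 1 then snd a = 0 \<or> snd a = 2 else snd a = 1 \<or> snd a = 3)"

lemma parity:
  assumes da: "direction_assignment n n g" and a: "a \<in> arcs n n"
  shows "odd (VV n g a) = PP g a \<and> odd (UU n g a) = (\<not> PP g a)"
proof -
  obtain i j k where aa: "a = ((i,j),k)" and i: "1 \<le> i" "i \<le> n" and j: "1 \<le> j" "j \<le> n" and k: "k < 4"
    using a by (rule arcsE)
  have g1: "g (i,j) = 1 \<or> g (i,j) = -1" using gval[OF da i j] .
  have kk: "k = 0 \<or> k = 1 \<or> k = 2 \<or> k = 3" using k by auto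
  have e1: "odd (4*n - 2*x + 1)" if "x \<le> n" for x :: nat using that by presburger
  have e2: "even (4*n - 2*x)" for x :: nat by presburger
  have e3: "odd (2*x - 1)" if "1 \<le> x" for x :: nat using that by presburger
  have e4: "even (2*x - 2)" for x :: nat by presburger
  show ?thesis using kk g1 i j unfolding aa
    by (elim disjE; simp add: UU_def VV_def PP_def Let_def e1 e2 e3 e4)
qed

lemma injUV:
  assumes da: "direction_assignment n n g" and a: "a \<in> arcs n n" and b: "b \<in> arcs n n"
    and u: "UU n g a = UU n g b" and v: "VV n g a = VV n g b"
  shows "a = b"
proof -
  have pp: "PP g a = PP g b" using parity[OF da a] parity[OF da b] v by simp
  obtain i j k where aa: "a = ((i,j),k)" and i: "1 \<le> i" "i \<le> n" and j: "1 \<le> j" "j \<le> n" and k: "k < 4"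
    using a by (rule arcsE)
  obtain i' j' k' where bb: "b = ((i',j'),k')" and i': "1 \<le> i'" "i' \<le> n" and j': "1 \<le> j'" "j' \<le> n" and k': "k' < 4"
    using b by (rule arcsE)
  have g1: "g (i,j) = 1 \<or> g (i,j) = -1" using gval[OF da i j] .
  have g2: "g (i',j') = 1 \<or> g (i',j') = -1" using gval[OF da i' j'] .
  have kk: "k = 0 \<or> k = 1 \<or> k = 2 \<or> k = 3" "k' = 0 \<or> k' = 1 \<or> k' = 2 \<or> k' = 3" using k k' by auto
  show ?thesis using kk g1 g2 u v pp i j i' j' unfolding aa bb
    by (elim disjE; simp add: UU_def VV_def PP_def Let_def; intro conjI; linarith)
qed

lemma step_mod:
  assumes da: "direction_assignment n n g" and a: "a \<in> arcs n n"
  shows "next_arc n n g a \<in> arcs n n \<and>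
     UU n g (next_arc n n g a) = (UU n g a + 1) mod (4*n) \<and>
     VV n g (next_arc n n g a) = (VV n g a + 1) mod (4*n)"
  using step[OF da a] bounds[OF da a] by (auto simp: Suc_lessI)

lemma iter:
  assumes da: "direction_assignment n n g" and a: "a \<in> arcs n n"
  shows "(next_arc n n g ^^ t) a \<in> arcs n n \<and>
     UU n g ((next_arc n n g ^^ t) a) = (UU n g a + t) mod (4*n) \<and>
     VV n g ((next_arc n n g ^^ t) a) = (VV n g a + t) mod (4*n)"
proof (induction t)
  case 0
  then show ?case using a bounds[OF da a] by simp
next
  case (Suc t)
  then show ?case using step_mod[OF da, of "(next_arc n n g ^^ t) a"]
    by (simp add: mod_Suc_eq)
qed

lemma iter_mod:
  assumes da: "direction_assignment n n g" and a: "a \<in> arcs n n"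
  shows "(next_arc n n g ^^ t) a = (next_arc n n g ^^ (t mod (4*n))) a"
  apply (rule injUV[OF da])
  using iter[OF da a, of t] iter[OF da a, of "t mod (4*n)"] by (auto simp: mod_add_right_eq)

lemma ring_img:
  assumes da: "direction_assignment n n g" and a: "a \<in> arcs n n" and n: "n \<ge> 1"
  shows "ring_of n n g a = (\<lambda>t. (next_arc n n g ^^ t) a) ` {..<4*n}"
  unfolding ring_of_def
proof (intro equalityI subsetI)
  fix x assume "x \<in> {(next_arc n n g ^^ t) a |t. True}"
  then obtain t where x: "x = (next_arc n n g ^^ t) a" by auto
  show "x \<in> (\<lambda>t. (next_arc n n g ^^ t) a) ` {..<4*n}"
    using iter_mod[OF da a, of t] n x by auto
qed auto

lemma ring_card:
  assumes da: "direction_assignment n n g" and a: "a \<in> arcs n n" and n: "n \<ge> 1"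
  shows "card (ring_of n n g a) = 4*n"
proof -
  have "inj_on (\<lambda>t. (next_arc n n g ^^ t) a) {..<4*n}"
  proof (rule inj_onI)
    fix t1 t2 assume t: "t1 \<in> {..<4*n}" "t2 \<in> {..<4*n}" and e: "(next_arc n n g ^^ t1) a = (next_arc n n g ^^ t2) a"
    have "(VV n g a + t1) mod (4*n) = (VV n g a + t2) mod (4*n)"
      using iter[OF da a, of t1] iter[OF da a, of t2] e by simp
    then show "t1 = t2" using cancel t by auto
  qed
  then show ?thesis using ring_img[OF da a n] by (simp add: card_image)
qed

lemma ring_sub:
  assumes da: "direction_assignment n n g" and a: "a \<in> arcs n n"
  shows "ring_of n n g a \<subseteq> arcs n n"
  using iter[OF da a] unfolding ring_of_def by auto

lemma ring_self: "a \<in> ring_of n n g a"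
  unfolding ring_of_def by (auto intro: exI[of _ 0])

lemma ring_trans:
  assumes "x \<in> ring_of n n g b"
  shows "ring_of n n g x \<subseteq> ring_of n n g b"
proof
  obtain t where bt: "x = (next_arc n n g ^^ t) b" using assms unfolding ring_of_def by auto
  fix y assume "y \<in> ring_of n n g x"
  then obtain s where "y = (next_arc n n g ^^ s) x" unfolding ring_of_def by auto
  then have "y = (next_arc n n g ^^ (s+t)) b" by (simp add: bt funpow_add)
  then show "y \<in> ring_of n n g b" unfolding ring_of_def by auto
qed

lemma ring_closed:
  assumes da: "direction_assignment n n g" and a: "a \<in> arcs n n" and n: "n \<ge> 1"
    and b: "b \<in> ring_of n n g a"
  shows "ring_of n n g b = ring_of n n g a"
proof -
  obtain t where bt: "b = (next_arc n n g ^^ t) a" using b unfolding ring_of_def by auto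
  have sub1: "ring_of n n g b \<subseteq> ring_of n n g a" by (rule ring_trans[OF b])
  have "(next_arc n n g ^^ (4*n - t mod (4*n))) b = (next_arc n n g ^^ (4*n - t mod (4*n) + t)) a"
    unfolding bt by (simp add: funpow_add)
  also have "\<dots> = (next_arc n n g ^^ ((4*n - t mod (4*n) + t) mod (4*n))) a"
    by (rule iter_mod[OF da a])
  also have "(4*n - t mod (4*n) + t) mod (4*n) = 0"
  proof -
    have h1: "t mod (4*n) < 4*n" using n by simp
    have h2: "t mod (4*n) \<le> t" by (rule mod_less_eq_dividend)
    have "4*n - t mod (4*n) + t = 4*n + (t - t mod (4*n))" using h1 h2 by arith
    also have "t - t mod (4*n) = 4*n * (t div (4*n))" by (rule minus_mod_eq_mult_div)
    finally show ?thesis by simp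
  qed
  finally have "a \<in> ring_of n n g b" unfolding ring_of_def by (auto intro: exI[of _ "4*n - t mod (4*n)"])
  then have "ring_of n n g a \<subseteq> ring_of n n g b" by (rule ring_trans)
  then show ?thesis using sub1 by auto
qed

lemma count1:
  assumes da: "direction_assignment n n g" and a: "a \<in> arcs n n" and n: "n \<ge> 1"
    and f: "\<And>t. f ((next_arc n n g ^^ t) a) = (f a + t) mod (4*n)" and c: "c < 4*n"
  shows "card {b \<in> ring_of n n g a. f b = c} = 1"
proof -
  define t0 where "t0 = (c + 4*n - f a mod (4*n)) mod (4*n)"
  have t0: "t0 < 4*n" using n by (simp add: t0_def)
  have ft0: "f ((next_arc n n g ^^ t0) a) = c"
  proof -
    have "f ((next_arc n n g ^^ t0) a) = (f a + t0) mod (4*n)" by (rule f)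
    also have "\<dots> = (f a mod (4*n) + (c + 4*n - f a mod (4*n))) mod (4*n)"
      by (simp add: t0_def mod_add_right_eq mod_add_left_eq)
    also have "f a mod (4*n) + (c + 4*n - f a mod (4*n)) = c + 4*n"
    proof -
      have "f a mod (4*n) < 4*n" using n by simp
      then show ?thesis by arith
    qed
    finally show ?thesis using c by simp
  qed
  have "{b \<in> ring_of n n g a. f b = c} = {(next_arc n n g ^^ t0) a}"
  proof (intro equalityI subsetI)
    fix b assume "b \<in> {b \<in> ring_of n n g a. f b = c}"
    then obtain t where t: "t < 4*n" and bt: "b = (next_arc n n g ^^ t) a" and fb: "f b = c"
      using ring_img[OF da a n] by auto
    have "(f a + t) mod (4*n) = (f a + t0) mod (4*n)" using f[of t] f[of t0] fb ft0 bt by simp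
    then have "t = t0" using cancel t t0 by blast
    then show "b \<in> {(next_arc n n g ^^ t0) a}" using bt by simp
  next
    fix b assume "b \<in> {(next_arc n n g ^^ t0) a}"
    then show "b \<in> {b \<in> ring_of n n g a. f b = c}" using ft0 unfolding ring_of_def by auto
  qed
  then show ?thesis by simp
qed

lemma char_top:
  assumes da: "direction_assignment n n g" and b: "b \<in> arcs n n"
  shows "(fst (fst b) = 1 \<and> end_pt g b = 1) \<longleftrightarrow> VV n g b = 4*n - 1"
proof -
  obtain i j k where aa: "b = ((i,j),k)" and i: "1 \<le> i" "i \<le> n" and j: "1 \<le> j" "j \<le> n" and k: "k < 4"
    using b by (rule arcsE)
  have g1: "g (i,j) = 1 \<or> g (i,j) = -1" using gval[OF da i j] .
  have kk: "k = 0 \<or> k = 1 \<or> k = 2 \<or> k = 3" using k by auto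
  show ?thesis using kk g1 i j unfolding aa
    by (elim disjE; simp add: VV_def end_pt_def Let_def; presburger)
qed

lemma char_bot:
  assumes da: "direction_assignment n n g" and b: "b \<in> arcs n n"
  shows "(fst (fst b) = n \<and> end_pt g b = 3) \<longleftrightarrow> VV n g b = 2*n - 1"
proof -
  obtain i j k where aa: "b = ((i,j),k)" and i: "1 \<le> i" "i \<le> n" and j: "1 \<le> j" "j \<le> n" and k: "k < 4"
    using b by (rule arcsE)
  have g1: "g (i,j) = 1 \<or> g (i,j) = -1" using gval[OF da i j] .
  have kk: "k = 0 \<or> k = 1 \<or> k = 2 \<or> k = 3" using k by auto
  show ?thesis using kk g1 i j unfolding aa
    by (elim disjE; simp add: VV_def end_pt_def Let_def; presburger)
qed

lemma char_left:
  assumes da: "direction_assignment n n g" and b: "b \<in> arcs n n"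
  shows "(snd (fst b) = 1 \<and> end_pt g b = 2) \<longleftrightarrow> UU n g b = 4*n - 1"
proof -
  obtain i j k where aa: "b = ((i,j),k)" and i: "1 \<le> i" "i \<le> n" and j: "1 \<le> j" "j \<le> n" and k: "k < 4"
    using b by (rule arcsE)
  have g1: "g (i,j) = 1 \<or> g (i,j) = -1" using gval[OF da i j] .
  have kk: "k = 0 \<or> k = 1 \<or> k = 2 \<or> k = 3" using k by auto
  show ?thesis using kk g1 i j unfolding aa
    by (elim disjE; simp add: UU_def end_pt_def Let_def; presburger)
qed

lemma char_right:
  assumes da: "direction_assignment n n g" and b: "b \<in> arcs n n"
  shows "(snd (fst b) = n \<and> end_pt g b = 0) \<longleftrightarrow> UU n g b = 2*n - 1"
proof -
  obtain i j k where aa: "b = ((i,j),k)" and i: "1 \<le> i" "i \<le> n" and j: "1 \<le> j" "j \<le> n" and k: "k < 4"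
    using b by (rule arcsE)
  have g1: "g (i,j) = 1 \<or> g (i,j) = -1" using gval[OF da i j] .
  have kk: "k = 0 \<or> k = 1 \<or> k = 2 \<or> k = 3" using k by auto
  show ?thesis using kk g1 i j unfolding aa
    by (elim disjE; simp add: UU_def end_pt_def Let_def; presburger)
qed


theorem lemma13:
  fixes n :: nat and g :: "circ \<Rightarrow> int"
  assumes "n \<ge> 1" and "direction_assignment n n g"
  shows "card (rings n n g) = n \<and>
         (\<forall>R \<in> rings n n g. ring_length R = 2 * real n * pi \<and>
            hits_top n n g R = 1 \<and> hits_bottom n n g R = 1 \<and>
            hits_left n n g R = 1 \<and> hits_right n n g R = 1)"
proof -
  note n = assms(1) and da = assms(2)
  have fin: "finite (arcs n n)" by (simp add: arcs_def grid_def)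
  have cardA: "card (arcs n n) = n * n * 4" by (simp add: arcs_def grid_def card_cartesian_product)
  have U: "\<Union> (rings n n g) = arcs n n"
  proof (intro equalityI subsetI)
    fix x assume "x \<in> \<Union> (rings n n g)"
    then obtain a where a: "a \<in> arcs n n" "x \<in> ring_of n n g a" unfolding rings_def by auto
    then show "x \<in> arcs n n" using ring_sub[OF da a(1)] by auto
  next
    fix x assume x: "x \<in> arcs n n"
    have "x \<in> ring_of n n g x" by (rule ring_self)
    then show "x \<in> \<Union> (rings n n g)" unfolding rings_def using x by blast
  qed
  have disj: "pairwise disjnt (rings n n g)"
    unfolding pairwise_def disjnt_def
  proof (intro ballI impI)
    fix R1 R2 assume R: "R1 \<in> rings n n g" "R2 \<in> rings n n g" "R1 \<noteq> R2"
    obtain a1 where a1: "a1 \<in> arcs n n" "R1 = ring_of n n g a1" using R(1) unfolding rings_def by blast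
    obtain a2 where a2: "a2 \<in> arcs n n" "R2 = ring_of n n g a2" using R(2) unfolding rings_def by blast
    note a = a1(1) a2(1) a1(2) a2(2)
    show "R1 \<inter> R2 = {}"
    proof (rule ccontr)
      assume "R1 \<inter> R2 \<noteq> {}"
      then obtain x where x: "x \<in> R1" "x \<in> R2" by auto
      have x1: "x \<in> ring_of n n g a1" using x(1) a1(2) by simp
      have x2: "x \<in> ring_of n n g a2" using x(2) a2(2) by simp
      have "R1 = ring_of n n g x" using ring_closed[OF da a1(1) n x1] a1(2) by simp
      moreover have "R2 = ring_of n n g x" using ring_closed[OF da a2(1) n x2] a2(2) by simp
      ultimately show False using R(3) by simp
    qed
  qed
  have cR: "\<And>R. R \<in> rings n n g \<Longrightarrow> card R = 4*n"
    unfolding rings_def using ring_card[OF da _ n] by auto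
  have finR: "\<And>R. R \<in> rings n n g \<Longrightarrow> finite R"
    using cR n by (metis card.infinite mult_is_0 not_one_le_zero zero_neq_numeral)
  have "card (\<Union> (rings n n g)) = sum card (rings n n g)"
    by (rule card_Union_disjoint[OF disj finR])
  also have "\<dots> = card (rings n n g) * (4*n)" using cR by simp
  finally have "n * n * 4 = card (rings n n g) * (4*n)" using U cardA by simp
  then have c1: "card (rings n n g) = n" using n by simp
  have c2: "ring_length R = 2 * real n * pi \<and>
            hits_top n n g R = 1 \<and> hits_bottom n n g R = 1 \<and>
            hits_left n n g R = 1 \<and> hits_right n n g R = 1" if R: "R \<in> rings n n g" for R
  proof -
    obtain a where a: "a \<in> arcs n n" and Ra: "R = ring_of n n g a" using R unfolding rings_def by auto
    have sub: "R \<subseteq> arcs n n" using ring_sub[OF da a] Ra by simp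
    have fV: "\<And>t. VV n g ((next_arc n n g ^^ t) a) = (VV n g a + t) mod (4*n)" using iter[OF da a] by simp
    have fU: "\<And>t. UU n g ((next_arc n n g ^^ t) a) = (UU n g a + t) mod (4*n)" using iter[OF da a] by simp
    have l: "ring_length R = 2 * real n * pi" using cR[OF R] by (simp add: ring_length_def)
    have "{b \<in> R. fst (fst b) = 1 \<and> end_pt g b = 1} = {b \<in> ring_of n n g a. VV n g b = 4*n - 1}"
      using char_top[OF da] sub Ra by auto
    then have h1: "hits_top n n g R = 1" unfolding hits_top_def using count1[OF da a n fV] n by simp
    have "{b \<in> R. fst (fst b) = n \<and> end_pt g b = 3} = {b \<in> ring_of n n g a. VV n g b = 2*n - 1}"
      using char_bot[OF da] sub Ra by auto
    then have h2: "hits_bottom n n g R = 1" unfolding hits_bottom_def using count1[OF da a n fV] n by simp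
    have "{b \<in> R. snd (fst b) = 1 \<and> end_pt g b = 2} = {b \<in> ring_of n n g a. UU n g b = 4*n - 1}"
      using char_left[OF da] sub Ra by auto
    then have h3: "hits_left n n g R = 1" unfolding hits_left_def using count1[OF da a n fU] n by simp
    have "{b \<in> R. snd (fst b) = n \<and> end_pt g b = 0} = {b \<in> ring_of n n g a. UU n g b = 2*n - 1}"
      using char_right[OF da] sub Ra by auto
    then have h4: "hits_right n n g R = 1" unfolding hits_right_def using count1[OF da a n fU] n by simp
    show ?thesis using l h1 h2 h3 h4 by simp
  qed
  show ?thesis using c1 c2 by blast
qed


end
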